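(* Let $A=\{A_n\}_{n\ge0}$ be a finitely supported complex sequence with $A_0=0$, not identically zero, and put $a_n=(A_n-A_{n-1})/n$ for $n\ge1$ (so $A_n=\sum_{k=1}^n k a_k$). Then $$\sum_{n=1}^\infty\frac{|A_n|^2}{n(n+1)^2}<\sum_{n=1}^\infty\frac{|A_n|^2}{n^2(n+1)}\le\sum_{n=1}^\infty n|a_n|^2 .$$ *)

theory Defs
  imports "HOL-Analysis.Analysis"
begin

end

theory Submission
  imports Defs
begin

lemma cs: fixes x :: "nat \<Rightarrow> real" shows "(\<Sum>k<n. x k)^2 \<le> real n * (\<Sum>k<n. (x k)^2)"
proof (induction n)
  case 0 then show ?case by simp
next
  case (Suc n)
  have "0 \<le> (\<Sum>k<n. (x k - x n)^2)" by (simp add: sum_nonneg)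
  also have "\<dots> = (\<Sum>k<n. (x k)^2) - 2 * x n * (\<Sum>k<n. x k) + real n * (x n)^2"
    by (simp add: power2_diff sum.distrib sum_subtractf sum_distrib_left sum_distrib_right algebra_simps)
  finally have h: "2 * x n * (\<Sum>k<n. x k) \<le> (\<Sum>k<n. (x k)^2) + real n * (x n)^2" by simp
  show ?case using Suc.IH h by (simp add: power2_sum algebra_simps)
qed
lemma tel: fixes c :: "nat \<Rightarrow> real"
  shows "(\<Sum>n<N. (\<Sum>k<Suc n. c k) / ((real n + 1) * (real n + 2))) = (\<Sum>k<N. c k / (real k + 1)) - (\<Sum>k<N. c k) / (real N + 1)"
proof (induction N)
  case 0 then show ?case by simp
next
  case (Suc N)
  define L where "L = (\<Sum>n<N. (\<Sum>k<Suc n. c k) / ((real n + 1) * (real n + 2)))"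
  define R where "R = (\<Sum>k<N. c k / (real k + 1))"
  define T where "T = (\<Sum>k<N. c k)"
  have ih: "L = R - T / (real N + 1)" using Suc.IH by (simp add: L_def R_def T_def)
  have "(\<Sum>n<Suc N. (\<Sum>k<Suc n. c k) / ((real n + 1) * (real n + 2))) = L + (T + c N) / ((real N + 1) * (real N + 2))"
    by (simp add: L_def T_def add.commute)
  also have "\<dots> = (R + c N / (real N + 1)) - (T + c N) / (real (Suc N) + 1)"
  proof -
    have x: "real N + 1 > 0" "real N + 2 > 0" by auto
    have "R - T / (real N + 1) + (T + c N) / ((real N + 1) * (real N + 2)) = (R + c N / (real N + 1)) - (T + c N) / (real N + 2)"
      using x by (simp add: divide_simps) (simp add: algebra_simps)
    then show ?thesis unfolding ih by simp
  qed
  finally show ?case by (simp add: R_def T_def add.commute)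
qed

theorem corollary2p2:
  fixes A :: "nat \<Rightarrow> complex" and a :: "nat \<Rightarrow> complex"
  assumes fin_supp: "finite {n. A n \<noteq> 0}"
    and A0: "A 0 = 0"
    and nonzero: "\<exists>n. A n \<noteq> 0"
    and a_def: "\<And>n. n \<ge> 1 \<Longrightarrow> a n = (A n - A (n - 1)) / of_nat n"
  shows "(\<Sum>n. (cmod (A (Suc n)))\<^sup>2 / (real (Suc n) * (real (Suc n) + 1)\<^sup>2))
           < (\<Sum>n. (cmod (A (Suc n)))\<^sup>2 / ((real (Suc n))\<^sup>2 * (real (Suc n) + 1)))
       \<and> (\<Sum>n. (cmod (A (Suc n)))\<^sup>2 / ((real (Suc n))\<^sup>2 * (real (Suc n) + 1)))
           \<le> (\<Sum>n. real (Suc n) * (cmod (a (Suc n)))\<^sup>2)"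
proof -
  obtain N where N: "{n. A n \<noteq> 0} \<subseteq> {..<N}" using finite_nat_bounded[OF fin_supp] by blast
  have Az: "A n = 0" if "n \<ge> N" for n using N that by force
  define b where "b k = A (Suc k) - A k" for k
  define c where "c k = (cmod (b k))^2" for k
  have aS: "a (Suc n) = b n / of_nat (Suc n)" for n using a_def[of "Suc n"] by (simp add: b_def)
  have az: "a (Suc n) = 0" if "n \<ge> N" for n using Az[of n] Az[of "Suc n"] that by (simp add: aS b_def)
  have s1: "(\<Sum>n. (cmod (A (Suc n)))\<^sup>2 / (real (Suc n) * (real (Suc n) + 1)\<^sup>2))
     = (\<Sum>n<N. (cmod (A (Suc n)))\<^sup>2 / (real (Suc n) * (real (Suc n) + 1)\<^sup>2))"
    by (rule suminf_finite) (auto simp: Az)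
  have s2: "(\<Sum>n. (cmod (A (Suc n)))\<^sup>2 / ((real (Suc n))\<^sup>2 * (real (Suc n) + 1)))
     = (\<Sum>n<N. (cmod (A (Suc n)))\<^sup>2 / ((real (Suc n))\<^sup>2 * (real (Suc n) + 1)))"
    by (rule suminf_finite) (auto simp: Az)
  have s3: "(\<Sum>n. real (Suc n) * (cmod (a (Suc n)))\<^sup>2) = (\<Sum>n<N. real (Suc n) * (cmod (a (Suc n)))\<^sup>2)"
    by (rule suminf_finite) (auto simp: az)
  have part1: "(\<Sum>n<N. (cmod (A (Suc n)))\<^sup>2 / (real (Suc n) * (real (Suc n) + 1)\<^sup>2))
     < (\<Sum>n<N. (cmod (A (Suc n)))\<^sup>2 / ((real (Suc n))\<^sup>2 * (real (Suc n) + 1)))"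
  proof (rule sum_strict_mono_ex1)
    have den: "(real (Suc n))\<^sup>2 * (real (Suc n) + 1) \<le> real (Suc n) * (real (Suc n) + 1)\<^sup>2" for n
      by (simp add: power2_eq_square algebra_simps)
    show "\<forall>n\<in>{..<N}. (cmod (A (Suc n)))\<^sup>2 / (real (Suc n) * (real (Suc n) + 1)\<^sup>2)
         \<le> (cmod (A (Suc n)))\<^sup>2 / ((real (Suc n))\<^sup>2 * (real (Suc n) + 1))"
      using den by (auto intro!: divide_left_mono)
    obtain m where m: "A m \<noteq> 0" using nonzero by blast
    then obtain n where n: "m = Suc n" using A0 by (cases m) auto
    have "n < N" using m n Az[of m] by (cases "n < N") auto
    moreover have "(cmod (A (Suc n)))\<^sup>2 / (real (Suc n) * (real (Suc n) + 1)\<^sup>2)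
         < (cmod (A (Suc n)))\<^sup>2 / ((real (Suc n))\<^sup>2 * (real (Suc n) + 1))"
    proof (rule divide_strict_left_mono)
      have g: "x\<^sup>2 * (x + 1) < x * (x + 1)\<^sup>2" if "x > 0" for x :: real
      proof -
        have "x * (x + 1) > 0" using that by simp
        moreover have "x * (x + 1)\<^sup>2 = x\<^sup>2 * (x + 1) + x * (x + 1)"
          by (simp add: power2_eq_square algebra_simps)
        ultimately show ?thesis by linarith
      qed
      show "(real (Suc n))\<^sup>2 * (real (Suc n) + 1) < real (Suc n) * (real (Suc n) + 1)\<^sup>2"
        by (rule g) simp
      show "0 < (cmod (A (Suc n)))\<^sup>2" using m n by simp
      show "0 < real (Suc n) * (real (Suc n) + 1)\<^sup>2 * ((real (Suc n))\<^sup>2 * (real (Suc n) + 1))"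
        by (intro mult_pos_pos) auto
    qed
    ultimately show "\<exists>n\<in>{..<N}. (cmod (A (Suc n)))\<^sup>2 / (real (Suc n) * (real (Suc n) + 1)\<^sup>2)
         < (cmod (A (Suc n)))\<^sup>2 / ((real (Suc n))\<^sup>2 * (real (Suc n) + 1))" by blast
  qed simp
  have AS: "A (Suc n) = (\<Sum>k<Suc n. b k)" for n
    unfolding b_def using sum_lessThan_telescope[of A "Suc n"] A0 by simp
  have bound: "(cmod (A (Suc n)))\<^sup>2 \<le> real (Suc n) * (\<Sum>k<Suc n. c k)" for n
  proof -
    have "cmod (A (Suc n)) \<le> (\<Sum>k<Suc n. cmod (b k))" unfolding AS by (rule norm_sum)
    then have "(cmod (A (Suc n)))\<^sup>2 \<le> (\<Sum>k<Suc n. cmod (b k))\<^sup>2" by (rule power_mono) simp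
    also have "\<dots> \<le> real (Suc n) * (\<Sum>k<Suc n. c k)" unfolding c_def by (rule cs)
    finally show ?thesis .
  qed
  have term2: "(cmod (A (Suc n)))\<^sup>2 / ((real (Suc n))\<^sup>2 * (real (Suc n) + 1))
      \<le> (\<Sum>k<Suc n. c k) / ((real n + 1) * (real n + 2))" for n
  proof -
    have "(cmod (A (Suc n)))\<^sup>2 / ((real (Suc n))\<^sup>2 * (real (Suc n) + 1))
       \<le> (real (Suc n) * (\<Sum>k<Suc n. c k)) / ((real (Suc n))\<^sup>2 * (real (Suc n) + 1))"
      by (rule divide_right_mono[OF bound]) simp
    also have "\<dots> = (\<Sum>k<Suc n. c k) / ((real n + 1) * (real n + 2))"
    proof -
      have g: "x * S / (x\<^sup>2 * (x + 1)) = S / (x * (x + 1))" if "x > 0" for x S :: real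
        using that by (simp add: power2_eq_square)
      have e: "real n + 2 = real (Suc n) + 1" "real n + 1 = real (Suc n)" by simp_all
      show ?thesis unfolding e by (rule g) simp
    qed
    finally show ?thesis .
  qed
  have part2: "(\<Sum>n<N. (cmod (A (Suc n)))\<^sup>2 / ((real (Suc n))\<^sup>2 * (real (Suc n) + 1)))
      \<le> (\<Sum>n<N. real (Suc n) * (cmod (a (Suc n)))\<^sup>2)"
  proof -
    have "(\<Sum>n<N. (cmod (A (Suc n)))\<^sup>2 / ((real (Suc n))\<^sup>2 * (real (Suc n) + 1)))
       \<le> (\<Sum>n<N. (\<Sum>k<Suc n. c k) / ((real n + 1) * (real n + 2)))"
      by (rule sum_mono) (rule term2)
    also have "\<dots> = (\<Sum>k<N. c k / (real k + 1)) - (\<Sum>k<N. c k) / (real N + 1)" by (rule tel)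
    also have "\<dots> \<le> (\<Sum>k<N. c k / (real k + 1))"
      by (simp add: c_def sum_nonneg)
    also have "\<dots> = (\<Sum>n<N. real (Suc n) * (cmod (a (Suc n)))\<^sup>2)"
    proof (rule sum.cong[OF refl])
      fix n
      have "cmod (a (Suc n)) = cmod (b n) / (real n + 1)"
      proof -
        have "cmod (of_nat (Suc n) :: complex) = real (Suc n)" by (rule norm_of_nat)
        then show ?thesis by (simp add: aS norm_divide del: of_nat_Suc)
      qed
      moreover have "x\<^sup>2 / m = m * (x / m)\<^sup>2" if "m > 0" for x m :: real
        using that by (simp add: power2_eq_square)
      ultimately show "c n / (real n + 1) = real (Suc n) * (cmod (a (Suc n)))\<^sup>2"
        unfolding c_def by (metis of_nat_Suc add.commute of_nat_0_less_iff zero_less_Suc)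
    qed
    finally show ?thesis .
  qed
  show ?thesis using part1 part2 s1 s2 s3 by simp
qed

end
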